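(* Let $q$ be a prime number and $l$ a positive integer. Then $\dfrac{-1}{q^{s-1}}\in\mathbb{Q}\text{-}\mathcal{KS}(q^{l})$ for every positive integer $s$ dividing $l-1$ such that $\dfrac{l-1}{s}$ is even.
   Context: Every nonzero rational $\alpha$ is written $\alpha=\alpha_1/\alpha_2$ with $\alpha_1\in\mathbb{Z}$, $\alpha_2$ a positive integer and $\gcd(\alpha_1,\alpha_2)=1$. For an integer $N\ge 2$ and a nonzero rational $\alpha=\alpha_1/\alpha_2$, $N$ is called an $\alpha$-Korselt number if $N\neq\alpha$ and $\alpha_2p-\alpha_1$ divides $\alpha_2N-\alpha_1$ (in $\mathbb{Z}$) for every prime divisor $p$ of $N$. $\mathbb{Q}\text{-}\mathcal{KS}(N)$ is the set of all $\beta\in\mathbb{Q}\setminus\{0,N\}$ such that $N$ is a $\beta$-Korselt number. *)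

theory Defs
  imports Complex_Main "HOL-Computational_Algebra.Primes"
begin

text \<open>For a nonzero rational alpha = alpha1/alpha2 in lowest terms (alpha2 > 0),
  N \<ge> 2 is an alpha-Korselt number if N \<noteq> alpha and alpha2*p - alpha1 divides
  alpha2*N - alpha1 for every prime divisor p of N.  quotient_of gives exactly
  the normalized pair (alpha1, alpha2).\<close>

definition alpha_korselt :: "nat \<Rightarrow> rat \<Rightarrow> bool" where
  "alpha_korselt N \<alpha> \<longleftrightarrow>
     N \<ge> 2 \<and> \<alpha> \<noteq> 0 \<and> \<alpha> \<noteq> of_nat N \<and>
     (let (a1, a2) = quotient_of \<alpha> in
        \<forall>p::nat. prime p \<and> p dvd N \<longrightarrow> (a2 * int p - a1) dvd (a2 * int N - a1))"

definition Q_KS :: "nat \<Rightarrow> rat set" where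
  "Q_KS N = {\<beta>. \<beta> \<noteq> 0 \<and> \<beta> \<noteq> of_nat N \<and> alpha_korselt N \<beta>}"

end

theory Submission
  imports Defs "HOL-Number_Theory.Cong"
begin

lemma quot_neg_inv:
  assumes "m > (0::nat)"
  shows "quotient_of (- 1 / rat_of_nat m) = (-1, int m)"
proof -
  have e: "- 1 / rat_of_nat m = Fract (fst (-1, int m)) (snd (-1, int m))"
    by (simp add: Fract_of_int_quotient)
  have "(THE p. - 1 / rat_of_nat m = Fract (fst p) (snd p) \<and> 0 < snd p \<and> coprime (fst p) (snd p)) = (-1, int m)"
    by (rule the1_equality[OF quotient_of_unique]) (use e assms in auto)
  then show ?thesis by (simp add: quotient_of_def)
qed

lemma odd_pow_dvd:
  fixes x :: int
  shows "(x + 1) dvd (x ^ (2*k+1) + 1)"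
proof -
  have "[x = -1] (mod (x+1))" by (simp add: cong_iff_dvd_diff)
  hence "[x ^ (2*k+1) = (-1) ^ (2*k+1)] (mod (x+1))" by (rule cong_pow)
  hence "[x ^ (2*k+1) + 1 = (-1) ^ (2*k+1) + 1] (mod (x+1))" by (rule cong_add) simp
  thus ?thesis by (simp add: cong_0_iff)
qed

theorem proposition5p2:
  fixes q l s :: nat
  assumes "prime q" and "l > 0" and "s > 0" and "s dvd (l - 1)" and "even ((l - 1) div s)"
  shows "(- 1 / (of_nat q) ^ (s - 1) :: rat) \<in> Q_KS (q ^ l)"
proof -
  have q2: "q \<ge> 2" using assms(1) prime_ge_2_nat by blast
  define m where "m = q ^ (s - 1)"
  have m0: "m > 0" using q2 by (simp add: m_def)
  have alpha: "(- 1 / (of_nat q) ^ (s - 1) :: rat) = - 1 / rat_of_nat m" by (simp add: m_def)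
  have qo: "quotient_of (- 1 / rat_of_nat m) = (-1, int m)" using quot_neg_inv[OF m0] .
  have "q ^ 1 \<le> q ^ l" by (rule power_increasing) (use assms(2) q2 in auto)
  hence N2: "q ^ l \<ge> 2" using q2 by simp
  have ne0: "(- 1 / rat_of_nat m) \<noteq> 0" using m0 by simp
  have neN: "(- 1 / rat_of_nat m) \<noteq> of_nat (q ^ l)"
  proof -
    have "(- 1 / rat_of_nat m) < 0" using m0 by simp
    moreover have "(0::rat) \<le> of_nat (q ^ l)" by simp
    ultimately show ?thesis by linarith
  qed
  obtain j where j: "l - 1 = s * j" using assms(4) by (auto elim: dvdE)
  hence "(l - 1) div s = j" using assms(3) by simp
  then obtain k where "j = 2 * k" using assms(5) by (auto elim: evenE)
  with j have k: "l - 1 = s * (2 * k)" by simp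
  have l: "l = s*(2*k) + 1" using k assms(2) by linarith
  have "s - 1 + l = s + s*(2*k)" using assms(3) l by linarith
  also have "\<dots> = s * (2*k+1)" by (simp add: distrib_left)
  finally have exp: "s - 1 + l = s * (2*k+1)" .
  have dv: "\<forall>p::nat. prime p \<and> p dvd q ^ l \<longrightarrow> (int m * int p - (-1)) dvd (int m * int (q ^ l) - (-1))"
  proof (intro allI impI)
    fix p :: nat assume "prime p \<and> p dvd q ^ l"
    hence "p dvd q" using prime_dvd_power by blast
    hence "p = q" using assms(1) \<open>prime p \<and> p dvd q ^ l\<close> primes_dvd_imp_eq by blast
    have a: "int m * int p - (-1) = int q ^ s + 1"
    proof -
      have "q ^ (s - 1) * q = q ^ s" using assms(3) by (rule power_minus_mult)
      hence "int m * int q = int q ^ s" unfolding m_def by (metis of_nat_mult of_nat_power)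
      thus ?thesis using \<open>p = q\<close> by simp
    qed
    have "int m * int (q ^ l) = int q ^ (s - 1 + l)" by (simp add: m_def power_add)
    also have "\<dots> = (int q ^ s) ^ (2*k+1)" unfolding exp by (rule power_mult)
    finally have b: "int m * int (q ^ l) - (-1) = (int q ^ s) ^ (2*k+1) + 1" by simp
    show "(int m * int p - (-1)) dvd (int m * int (q ^ l) - (-1))"
      unfolding a b by (rule odd_pow_dvd)
  qed
  show ?thesis
    unfolding alpha Q_KS_def alpha_korselt_def using N2 ne0 neN qo dv by simp
qed

end
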